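(* Let $\mathcal X$ be a set, $k:\mathcal X\times\mathcal X\to\mathbb R$ any positive-semidefinite kernel, and define $\tilde k(x,x')=k(x,x)$ if $x=x'$ and $\tilde k(x,x')=0$ if $x\ne x'$. Let $x_1,x_2,\dots\in\mathcal X$ be any points (repetitions allowed) with observations, and for $t\ge0$ let $\sigma_t^2$ and $\tilde\sigma_t^2$ denote the GP posterior predictive variances, with Gaussian noise variance $\sigma_\epsilon^2>0$, of GP models with prior covariance $k$ and $\tilde k$ respectively, both conditioned on the observations at $x_1,\dots,x_t$. Then for all $t\ge0$ and all $x\in\mathcal X$, $$\sigma_t^2(x)\le\tilde\sigma_t^2(x)=\frac{\sigma_\epsilon^2\,\tilde\sigma_0^2(x)}{\sigma_\epsilon^2+N_t(x)\,\tilde\sigma_0^2(x)},$$ where $N_t(x)=\sum_{i=1}^t\mathbb 1\{x_i=x\}$ and $\tilde\sigma_0^2(x)=\sigma_0^2(x)=k(x,x)$.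
   Context: For a prior covariance $c$ and observation points $x_1,\dots,x_t$, the GP posterior variance with noise variance $\sigma_\epsilon^2$ is $\sigma_t^2(x)=c(x,x)-\mathbf c_t(x)^\top(\mathbf C_t+\sigma_\epsilon^2I)^{-1}\mathbf c_t(x)$, where $\mathbf c_t(x)=[c(x,x_i)]_{i=1}^t$ and $\mathbf C_t=[c(x_i,x_j)]_{i,j=1}^t$; for $t=0$ it is $c(x,x)$. It does not depend on the observed values. *)

theory Defs
  imports Complex_Main "Jordan_Normal_Form.Matrix" "Jordan_Normal_Form.Gauss_Jordan_Elimination"
begin

definition psd_kernel :: "('a \<Rightarrow> 'a \<Rightarrow> real) \<Rightarrow> bool" where
  "psd_kernel k \<longleftrightarrow> (\<forall>x y. k x y = k y x) \<and>
     (\<forall>(n::nat) (ys::nat \<Rightarrow> 'a) (a::nat \<Rightarrow> real).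
        0 \<le> (\<Sum>i<n. \<Sum>j<n. a i * a j * k (ys i) (ys j)))"

definition diag_kernel :: "('a \<Rightarrow> 'a \<Rightarrow> real) \<Rightarrow> 'a \<Rightarrow> 'a \<Rightarrow> real" where
  "diag_kernel k x x' = (if x = x' then k x x else 0)"

(* observation points x_1, x_2, ... are xs 1, xs 2, ...; the value of xs 0 is irrelevant *)
definition kvec :: "('a \<Rightarrow> 'a \<Rightarrow> real) \<Rightarrow> (nat \<Rightarrow> 'a) \<Rightarrow> nat \<Rightarrow> 'a \<Rightarrow> real vec" where
  "kvec c xs t x = vec t (\<lambda>i. c x (xs (Suc i)))"

definition kmat :: "('a \<Rightarrow> 'a \<Rightarrow> real) \<Rightarrow> (nat \<Rightarrow> 'a) \<Rightarrow> nat \<Rightarrow> real mat" where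
  "kmat c xs t = mat t t (\<lambda>(i, j). c (xs (Suc i)) (xs (Suc j)))"

definition post_var :: "('a \<Rightarrow> 'a \<Rightarrow> real) \<Rightarrow> real \<Rightarrow> (nat \<Rightarrow> 'a) \<Rightarrow> nat \<Rightarrow> 'a \<Rightarrow> real" where
  "post_var c s2 xs t x =
     c x x - scalar_prod (kvec c xs t x)
       (mult_mat_vec (the (mat_inverse (kmat c xs t + s2 \<cdot>\<^sub>m 1\<^sub>m t))) (kvec c xs t x))"

definition count_obs :: "(nat \<Rightarrow> 'a) \<Rightarrow> nat \<Rightarrow> 'a \<Rightarrow> nat" where
  "count_obs xs t x = card {i \<in> {1..t}. xs i = x}"

end

theory Submission imports Defs "Jordan_Normal_Form.Determinant" begin

lemma key_ineq:
  fixes M :: "nat \<Rightarrow> nat \<Rightarrow> real"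
  assumes sym: "\<And>i j. M i j = M j i"
  and psd: "0 \<le> (\<Sum>i<t. \<Sum>j<t. (a i - b i) * (a j - b j) * M i j)"
  and sol: "\<And>i. i < t \<Longrightarrow> (\<Sum>j<t. M i j * b j) = cv i"
  shows "2*(\<Sum>i<t. a i * cv i) - (\<Sum>i<t. \<Sum>j<t. a i * a j * M i j) \<le> (\<Sum>i<t. cv i * b i)"
proof -
  have e: "(\<Sum>i<t. \<Sum>j<t. (a i - b i) * (a j - b j) * M i j) =
     (\<Sum>i<t. \<Sum>j<t. a i * a j * M i j) - (\<Sum>i<t. \<Sum>j<t. a i * (M i j * b j))
     - (\<Sum>i<t. \<Sum>j<t. b i * a j * M i j) + (\<Sum>i<t. \<Sum>j<t. b i * (M i j * b j))"
    by (simp add: sum_subtractf sum.distrib algebra_simps)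
  have e1: "(\<Sum>i<t. \<Sum>j<t. a i * (M i j * b j)) = (\<Sum>i<t. a i * cv i)"
    by (simp add: sum_distrib_left[symmetric] sol)
  have e3: "(\<Sum>i<t. \<Sum>j<t. b i * (M i j * b j)) = (\<Sum>i<t. cv i * b i)"
  proof -
    have "(\<Sum>i<t. \<Sum>j<t. b i * (M i j * b j)) = (\<Sum>i<t. b i * (\<Sum>j<t. M i j * b j))"
      by (simp only: sum_distrib_left)
    also have "\<dots> = (\<Sum>i<t. b i * cv i)" by (intro sum.cong refl, subst sol) auto
    also have "\<dots> = (\<Sum>i<t. cv i * b i)" by (simp add: mult.commute)
    finally show ?thesis .
  qed
  have "(\<Sum>i<t. \<Sum>j<t. b i * a j * M i j) = (\<Sum>j<t. \<Sum>i<t. b i * a j * M i j)"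
    by (rule sum.swap)
  also have "\<dots> = (\<Sum>j<t. a j * (\<Sum>i<t. M j i * b i))"
    by (simp add: sum_distrib_left sym algebra_simps)
  also have "\<dots> = (\<Sum>j<t. a j * cv j)" by (simp add: sol)
  finally have e2: "(\<Sum>i<t. \<Sum>j<t. b i * a j * M i j) = (\<Sum>j<t. a j * cv j)" .
  show ?thesis using psd unfolding e e1 e2 e3 by linarith
qed

definition Mm :: "('a \<Rightarrow> 'a \<Rightarrow> real) \<Rightarrow> real \<Rightarrow> (nat \<Rightarrow> 'a) \<Rightarrow> nat \<Rightarrow> nat \<Rightarrow> real" where
  "Mm c s2 xs i j = c (xs (Suc i)) (xs (Suc j)) + (if i = j then s2 else 0)"

lemma Mm_quad:
  "(\<Sum>i<t. \<Sum>j<t. d i * d j * Mm c s2 xs i j) =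
   (\<Sum>i<t. \<Sum>j<t. d i * d j * c (xs (Suc i)) (xs (Suc j))) + s2 * (\<Sum>i<t. d i * d i)"
proof -
  have "(\<Sum>i<t. \<Sum>j<t. d i * d j * Mm c s2 xs i j) =
   (\<Sum>i<t. \<Sum>j<t. d i * d j * c (xs (Suc i)) (xs (Suc j))) + (\<Sum>i<t. \<Sum>j<t. d i * d j * (if i = j then s2 else 0))"
    by (simp add: Mm_def sum.distrib algebra_simps)
  also have "(\<Sum>i<t. \<Sum>j<t. d i * d j * (if i = j then s2 else 0)) = (\<Sum>i<t. d i * d i * s2)"
    by (rule sum.cong, simp, simp add: if_distrib cong: if_cong)
  finally show ?thesis by (simp add: sum_distrib_left algebra_simps)
qed

lemma Mm_psd:
  assumes "psd_kernel c" "s2 > 0"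
  shows "s2 * (\<Sum>i<t. d i * d i) \<le> (\<Sum>i<t. \<Sum>j<t. d i * d j * Mm c s2 xs i j)"
proof -
  have "0 \<le> (\<Sum>i<t. \<Sum>j<t. d i * d j * c (xs (Suc i)) (xs (Suc j)))"
    using assms(1) unfolding psd_kernel_def
    by (metis (no_types) )
  thus ?thesis unfolding Mm_quad by linarith
qed

lemma Mm_sym: "psd_kernel c \<Longrightarrow> Mm c s2 xs i j = Mm c s2 xs j i"
  unfolding Mm_def psd_kernel_def by auto

lemma Mm_inj:
  assumes "psd_kernel c" "s2 > 0"
  and h: "\<And>i. i < t \<Longrightarrow> (\<Sum>j<t. Mm c s2 xs i j * d j) = 0"
  shows "\<forall>i<t. d i = 0"
proof -
  have "(\<Sum>i<t. \<Sum>j<t. d i * d j * Mm c s2 xs i j) = (\<Sum>i<t. d i * (\<Sum>j<t. Mm c s2 xs i j * d j))"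
    by (simp add: sum_distrib_left algebra_simps)
  also have "\<dots> = 0" by (simp add: h)
  finally have "s2 * (\<Sum>i<t. d i * d i) \<le> 0" using Mm_psd[OF assms(1,2), where t=t and d=d and xs=xs] by simp
  hence "(\<Sum>i<t. d i * d i) \<le> 0" using assms(2) by (simp add: mult_le_0_iff)
  moreover have "0 \<le> (\<Sum>i<t. d i * d i)" by (simp add: sum_nonneg)
  ultimately have "(\<Sum>i<t. d i * d i) = 0" by linarith
  hence "\<forall>i\<in>{..<t}. d i * d i = 0" by (subst (asm) sum_nonneg_eq_0_iff) auto
  thus ?thesis by auto
qed

lemma post_var_char:
  assumes "psd_kernel c" "s2 > 0"
  shows "\<exists>b. (\<forall>i<t. (\<Sum>j<t. Mm c s2 xs i j * b j) = c x (xs (Suc i))) \<and>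
     post_var c s2 xs t x = c x x - (\<Sum>i<t. c x (xs (Suc i)) * b i)"
proof -
  define A where "A = kmat c xs t + s2 \<cdot>\<^sub>m 1\<^sub>m t"
  have Ac: "A \<in> carrier_mat t t" by (simp add: A_def kmat_def)
  have Aij: "\<And>i j. i < t \<Longrightarrow> j < t \<Longrightarrow> A $$ (i,j) = Mm c s2 xs i j"
    by (simp add: A_def kmat_def Mm_def)
  have Av: "\<And>v i. v \<in> carrier_vec t \<Longrightarrow> i < t \<Longrightarrow> (A *\<^sub>v v) $ i = (\<Sum>j<t. Mm c s2 xs i j * v $ j)"
    using Ac by (auto simp: scalar_prod_def Aij lessThan_atLeast0 intro!: sum.cong)
  have "det A \<noteq> 0"
  proof
    assume "det A = 0"
    then obtain v where v: "v \<in> carrier_vec t" "v \<noteq> 0\<^sub>v t" "A *\<^sub>v v = 0\<^sub>v t"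
      using det_0_iff_vec_prod_zero_field[OF Ac] by blast
    have "\<forall>i<t. v $ i = 0"
      by (rule Mm_inj[OF assms, where t=t and xs=xs]) (metis Av v(1,3) index_zero_vec(1))
    hence "v = 0\<^sub>v t" using v(1) by (intro eq_vecI) auto
    with v(2) show False by simp
  qed
  from det_non_zero_imp_unit[OF Ac this, of "()"]
  have U: "A \<in> Units (ring_mat TYPE(real) t ())" .
  have "mat_inverse A \<noteq> None"
  proof
    assume "mat_inverse A = None"
    from mat_inverse(1)[OF Ac this, where b="()"] U show False by blast
  qed
  then obtain B where B: "mat_inverse A = Some B" by blast
  from mat_inverse(2)[OF Ac B] have AB: "A * B = 1\<^sub>m t" and Bc: "B \<in> carrier_mat t t" by auto
  define cv where "cv = kvec c xs t x"
  have cvc: "cv \<in> carrier_vec t" by (simp add: cv_def kvec_def)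
  define w where "w = B *\<^sub>v cv"
  have wc: "w \<in> carrier_vec t" using Bc cvc by (simp add: w_def)
  have "A *\<^sub>v w = cv" unfolding w_def
    using assoc_mult_mat_vec[OF Ac Bc cvc, symmetric] AB cvc by simp
  hence sol: "\<forall>i<t. (\<Sum>j<t. Mm c s2 xs i j * w $ j) = c x (xs (Suc i))"
    using Av[OF wc] by (auto simp: cv_def kvec_def)
  have "post_var c s2 xs t x = c x x - (\<Sum>i<t. c x (xs (Suc i)) * w $ i)"
    unfolding post_var_def A_def[symmetric] cv_def[symmetric] B w_def[symmetric] option.sel
    using wc by (simp add: scalar_prod_def cv_def kvec_def lessThan_atLeast0)
  with sol show ?thesis by blast
qed


lemma kxx_nonneg: "psd_kernel k \<Longrightarrow> 0 \<le> k x x"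
  unfolding psd_kernel_def
  apply (elim conjE)
  apply (drule spec[where x=1], drule spec[where x="\<lambda>_. x"], drule spec[where x="\<lambda>_. 1"])
  by simp

lemma diag_psd:
  assumes "psd_kernel k"
  shows "psd_kernel (diag_kernel k)"
  unfolding psd_kernel_def
proof (intro conjI allI)
  fix x y show "diag_kernel k x y = diag_kernel k y x" by (simp add: diag_kernel_def)
next
  fix n :: nat and ys :: "nat \<Rightarrow> 'a" and a :: "nat \<Rightarrow> real"
  define S where "S v = (\<Sum>j\<in>{j\<in>{..<n}. ys j = v}. a j)" for v
  have inner: "(\<Sum>j<n. a i * a j * diag_kernel k (ys i) (ys j)) = a i * k (ys i) (ys i) * S (ys i)" for i
  proof -
    have "(\<Sum>j<n. a i * a j * diag_kernel k (ys i) (ys j)) =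
       (\<Sum>j<n. if ys j = ys i then a i * k (ys i) (ys i) * a j else 0)"
      by (intro sum.cong refl) (auto simp: diag_kernel_def)
    also have "\<dots> = (\<Sum>j\<in>{j\<in>{..<n}. ys j = ys i}. a i * k (ys i) (ys i) * a j)"
      by (rule sum.inter_filter[symmetric]) simp
    also have "\<dots> = a i * k (ys i) (ys i) * S (ys i)" by (simp add: S_def sum_distrib_left)
    finally show ?thesis .
  qed
  have "(\<Sum>i<n. \<Sum>j<n. a i * a j * diag_kernel k (ys i) (ys j)) = (\<Sum>i<n. a i * k (ys i) (ys i) * S (ys i))"
    by (simp add: inner)
  also have "\<dots> = (\<Sum>v\<in>ys ` {..<n}. \<Sum>i\<in>{i\<in>{..<n}. ys i = v}. a i * k (ys i) (ys i) * S (ys i))"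
    by (rule sum.image_gen) simp
  also have "\<dots> = (\<Sum>v\<in>ys ` {..<n}. k v v * (S v * S v))"
  proof (intro sum.cong refl)
    fix v
    have "(\<Sum>i\<in>{i\<in>{..<n}. ys i = v}. a i * k (ys i) (ys i) * S (ys i)) =
          (\<Sum>i\<in>{i\<in>{..<n}. ys i = v}. a i * (k v v * S v))"
      by (intro sum.cong refl) auto
    also have "\<dots> = k v v * (S v * S v)" by (simp add: S_def sum_distrib_right[symmetric] algebra_simps)
    finally show "(\<Sum>i\<in>{i\<in>{..<n}. ys i = v}. a i * k (ys i) (ys i) * S (ys i)) = k v v * (S v * S v)" .
  qed
  also have "0 \<le> \<dots>"
    by (intro sum_nonneg) (simp add: kxx_nonneg[OF assms])
  finally show "0 \<le> (\<Sum>i<n. \<Sum>j<n. a i * a j * diag_kernel k (ys i) (ys j))" .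
qed

lemma count_eq: fixes xs :: "nat \<Rightarrow> 'a" shows "card {j\<in>{..<t}. xs (Suc j) = x} = count_obs xs t x"
proof -
  have "{i \<in> {1..t}. xs i = x} = Suc ` {j\<in>{..<t}. xs (Suc j) = x}"
  proof (intro equalityI subsetI)
    fix i assume "i \<in> {i \<in> {1..t}. xs i = x}"
    hence "i - 1 \<in> {j\<in>{..<t}. xs (Suc j) = x}" "i = Suc (i - 1)" by auto
    thus "i \<in> Suc ` {j\<in>{..<t}. xs (Suc j) = x}" by (metis imageI)
  qed auto
  thus ?thesis unfolding count_obs_def by (simp add: card_image)
qed

lemma post0: assumes "psd_kernel c" "s2 > 0" shows "post_var c s2 xs 0 x = c x x"
proof -
  obtain b where "post_var c s2 xs 0 x = c x x - (\<Sum>i<0. c x (xs (Suc i)) * b i)"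
    using post_var_char[OF assms, where t=0 and xs=xs and x=x] by blast
  thus ?thesis by simp
qed


theorem mainTheorem4:
  fixes k :: "'a \<Rightarrow> 'a \<Rightarrow> real" and xs :: "nat \<Rightarrow> 'a" and s2 :: real
  assumes "psd_kernel k" and "s2 > 0"
  shows "\<forall>(t::nat) (x::'a).
     post_var k s2 xs t x \<le> post_var (diag_kernel k) s2 xs t x \<and>
     post_var (diag_kernel k) s2 xs t x =
       s2 * post_var (diag_kernel k) s2 xs 0 x /
         (s2 + real (count_obs xs t x) * post_var (diag_kernel k) s2 xs 0 x) \<and>
     post_var (diag_kernel k) s2 xs 0 x = post_var k s2 xs 0 x \<and>
     post_var k s2 xs 0 x = k x x"
proof (intro allI)
  fix t :: nat and x :: 'a
  note dk = diag_psd[OF assms(1)]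
  have P0: "post_var k s2 xs 0 x = k x x" by (rule post0[OF assms])
  have P0d: "post_var (diag_kernel k) s2 xs 0 x = k x x"
    using post0[OF dk assms(2)] by (simp add: diag_kernel_def)
  define kx where "kx = k x x"
  have kx0: "0 \<le> kx" unfolding kx_def by (rule kxx_nonneg[OF assms(1)])
  define N where "N = real (count_obs xs t x)"
  have N0: "0 \<le> N" by (simp add: N_def)
  have den: "0 < s2 + N * kx" using assms(2) kx0 N0 by (simp add: add_pos_nonneg)
  define \<alpha> where "\<alpha> = kx / (s2 + N * kx)"
  define a where "a j = (if xs (Suc j) = x then \<alpha> else 0)" for j
  define y where "y j = xs (Suc j)" for j
  have cntS: "(\<Sum>j<t. if y j = x then r else 0) = N * r" for r
  proof -
    have "(\<Sum>j<t. if y j = x then r else 0) = (\<Sum>j\<in>{j\<in>{..<t}. xs (Suc j) = x}. r)"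
      by (subst sum.inter_filter) (auto simp: y_def)
    also have "\<dots> = N * r" by (simp only: sum_constant count_eq N_def)
    finally show ?thesis .
  qed
  have asol: "(\<Sum>j<t. Mm (diag_kernel k) s2 xs i j * a j) = diag_kernel k x (xs (Suc i))" if it: "i < t" for i
  proof -
    have "(\<Sum>j<t. Mm (diag_kernel k) s2 xs i j * a j) =
       (\<Sum>j<t. (if y i = y j then k (y i) (y i) else 0) * a j) + (\<Sum>j<t. (if i = j then s2 else 0) * a j)"
      unfolding y_def Mm_def diag_kernel_def by (simp add: sum.distrib algebra_simps)
    also have "(\<Sum>j<t. (if i = j then s2 else 0) * a j) = s2 * a i"
    proof -
      have "(\<Sum>j<t. (if i = j then s2 else 0) * a j) = (\<Sum>j<t. if i = j then s2 * a j else 0)"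
        by (rule sum.cong) auto
      also have "\<dots> = s2 * a i" using it by (simp add: sum.delta)
      finally show ?thesis .
    qed
    finally have e: "(\<Sum>j<t. Mm (diag_kernel k) s2 xs i j * a j) =
       (\<Sum>j<t. (if y i = y j then k (y i) (y i) else 0) * a j) + s2 * a i" .
    show ?thesis
    proof (cases "y i = x")
      case True
      have "(\<Sum>j<t. (if y i = y j then k (y i) (y i) else 0) * a j) = (\<Sum>j<t. if y j = x then kx * \<alpha> else 0)"
        using True by (intro sum.cong refl) (auto simp: a_def y_def kx_def)
      also have "\<dots> = N * (kx * \<alpha>)" by (rule cntS)
      finally have "(\<Sum>j<t. Mm (diag_kernel k) s2 xs i j * a j) = (N * kx + s2) * \<alpha>"
        using e True by (simp add: a_def y_def algebra_simps)
      also have "\<dots> = kx" using den by (simp add: \<alpha>_def field_simps)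
      finally show ?thesis using True by (simp add: diag_kernel_def y_def kx_def)
    next
      case False
      have "(\<Sum>j<t. (if y i = y j then k (y i) (y i) else 0) * a j) = 0"
        using False by (intro sum.neutral) (auto simp: a_def y_def)
      with e False show ?thesis by (auto simp: a_def y_def diag_kernel_def)
    qed
  qed
  obtain bt where bt: "\<forall>i<t. (\<Sum>j<t. Mm (diag_kernel k) s2 xs i j * bt j) = diag_kernel k x (xs (Suc i))"
    and pt: "post_var (diag_kernel k) s2 xs t x = diag_kernel k x x - (\<Sum>i<t. diag_kernel k x (xs (Suc i)) * bt i)"
    using post_var_char[OF dk assms(2), where t=t and xs=xs and x=x] by blast
  have "\<forall>i<t. bt i - a i = 0"
  proof (rule Mm_inj[OF dk assms(2)])
    fix i assume i: "i < t"
    have "(\<Sum>j<t. Mm (diag_kernel k) s2 xs i j * (bt j - a j)) =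
      (\<Sum>j<t. Mm (diag_kernel k) s2 xs i j * bt j) - (\<Sum>j<t. Mm (diag_kernel k) s2 xs i j * a j)"
      by (simp add: sum_subtractf right_diff_distrib)
    thus "(\<Sum>j<t. Mm (diag_kernel k) s2 xs i j * (bt j - a j)) = 0" using i bt asol by simp
  qed
  hence bta: "\<And>i. i < t \<Longrightarrow> bt i = a i" by auto
  have ptd: "post_var (diag_kernel k) s2 xs t x = kx - (\<Sum>i<t. diag_kernel k x (xs (Suc i)) * a i)"
    using pt bta by (simp add: diag_kernel_def kx_def)
  have sa: "(\<Sum>i<t. diag_kernel k x (xs (Suc i)) * a i) = N * (kx * \<alpha>)"
  proof -
    have "(\<Sum>i<t. diag_kernel k x (xs (Suc i)) * a i) = (\<Sum>j<t. if y j = x then kx * \<alpha> else 0)"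
      by (intro sum.cong refl) (auto simp: a_def y_def kx_def diag_kernel_def)
    thus ?thesis by (simp add: cntS)
  qed
  have EQ: "post_var (diag_kernel k) s2 xs t x = s2 * kx / (s2 + N * kx)"
    unfolding ptd sa using den by (simp add: \<alpha>_def field_simps)
  obtain b where bs: "\<forall>i<t. (\<Sum>j<t. Mm k s2 xs i j * b j) = k x (xs (Suc i))"
    and pk: "post_var k s2 xs t x = k x x - (\<Sum>i<t. k x (xs (Suc i)) * b i)"
    using post_var_char[OF assms, where t=t and xs=xs and x=x] by blast
  have psdM: "0 \<le> (\<Sum>i<t. \<Sum>j<t. (a i - b i) * (a j - b j) * Mm k s2 xs i j)"
  proof -
    have "0 \<le> s2 * (\<Sum>i<t. (a i - b i) * (a i - b i))"
      using assms(2) by (intro mult_nonneg_nonneg sum_nonneg zero_le_square) simp_all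
    thus ?thesis using Mm_psd[OF assms, where t=t and d="\<lambda>i. a i - b i" and xs=xs] by linarith
  qed
  have KI: "2*(\<Sum>i<t. a i * k x (xs (Suc i))) - (\<Sum>i<t. \<Sum>j<t. a i * a j * Mm k s2 xs i j)
      \<le> (\<Sum>i<t. k x (xs (Suc i)) * b i)"
    by (rule key_ineq[where M="Mm k s2 xs", OF Mm_sym[OF assms(1)] psdM]) (use bs in auto)
  have c1: "(\<Sum>i<t. a i * k x (xs (Suc i))) = (\<Sum>i<t. a i * diag_kernel k x (xs (Suc i)))"
    by (intro sum.cong refl) (auto simp: a_def diag_kernel_def)
  have c2: "(\<Sum>i<t. \<Sum>j<t. a i * a j * Mm k s2 xs i j) = (\<Sum>i<t. \<Sum>j<t. a i * a j * Mm (diag_kernel k) s2 xs i j)"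
    by (intro sum.cong refl) (auto simp: a_def diag_kernel_def Mm_def)
  have c3: "(\<Sum>i<t. \<Sum>j<t. a i * a j * Mm (diag_kernel k) s2 xs i j) = (\<Sum>i<t. a i * diag_kernel k x (xs (Suc i)))"
  proof -
    have "(\<Sum>i<t. \<Sum>j<t. a i * a j * Mm (diag_kernel k) s2 xs i j) =
        (\<Sum>i<t. a i * (\<Sum>j<t. Mm (diag_kernel k) s2 xs i j * a j))"
      by (simp add: sum_distrib_left algebra_simps)
    also have "\<dots> = (\<Sum>i<t. a i * diag_kernel k x (xs (Suc i)))"
      by (intro sum.cong refl) (simp add: asol)
    finally show ?thesis .
  qed
  have c4: "(\<Sum>i<t. diag_kernel k x (xs (Suc i)) * a i) = (\<Sum>i<t. a i * diag_kernel k x (xs (Suc i)))"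
    by (simp add: mult.commute)
  have INEQ: "post_var k s2 xs t x \<le> post_var (diag_kernel k) s2 xs t x"
    using KI pk ptd unfolding c1 c2 c3 c4 kx_def by linarith
  show "post_var k s2 xs t x \<le> post_var (diag_kernel k) s2 xs t x \<and>
     post_var (diag_kernel k) s2 xs t x =
       s2 * post_var (diag_kernel k) s2 xs 0 x /
         (s2 + real (count_obs xs t x) * post_var (diag_kernel k) s2 xs 0 x) \<and>
     post_var (diag_kernel k) s2 xs 0 x = post_var k s2 xs 0 x \<and>
     post_var k s2 xs 0 x = k x x"
    using INEQ EQ P0 P0d by (simp add: kx_def N_def)
qed

end
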